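(* Let $h$ be the height function of a single-species TASEP with arbitrary initial condition, and let $x(\cdot)$ be a backwards path with respect to $h$ started at some time $t$. Let $t_1<t_2$ in $[0,t]$ and $x_1,x_2\in\mathbb{Z}$, and suppose $x(t_1)\le x_1$ and $x(t_2)\le x_2$. Let $x^{\mathrm{step},r}(\tau)$, $\tau\in[t_1,t_2]$, be the rightmost backwards path with respect to $h^{\mathrm{step}}_{x_1,t_1}$ starting at time $t_2$ from position $x_2$, all processes being coupled by basic coupling. Then $x(\tau)\le x^{\mathrm{step},r}(\tau)$ for all $\tau\in[t_1,t_2]$.
   Context: Single-species TASEP (graphical construction): independent rate-one Poisson processes $\mathcal{P}_z$, $z\in\mathbb{Z}$; at each ring of $\mathcal{P}_z$ (a jump attempt at site $z$) a particle at $z$, if any, jumps to $z+1$ if $z+1$ is empty. Basic coupling: several TASEPs are constructed with the same Poisson processes. A height function $h(j,s)$ of a TASEP satisfies $h(j,s)-h(j-1,s)=1-2\eta_s(j)$ ($\eta_s(j)=1$ iff a particle is at $j$), and each jump of a particle from $j$ to $j+1$ at time $s$ increases $h(j,\cdot)$ by $2$ and leaves all other values unchanged. For $y\in\mathbb{Z}$, $\tau\ge0$, $h^{\mathrm{step}}_{y,\tau}$ denotes the height function of the TASEP started at time $\tau$ from particles on all sites $\le y$ and holes on all sites $>y$, normalised by $h^{\mathrm{step}}_{y,\tau}(j,\tau)=|j-y|$. Backwards path with respect to a height function $h$, started at time $t$ from $x(t)=x$: a piecewise constant path defined going backwards in time; it changes only at times $s$ at which there is a jump attempt at site $x(s)$.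 At such a time: if a jump occurred, i.e. $h(x(s),s)=h(x(s),s^-)+2$, set $x(s^-)=x(s)$; otherwise choose $x(s^-)\in\{x(s)-1,x(s)+1\}$ such that $h(x(s^-),s)=h(x(s),s)-1$. The rightmost (resp. leftmost) backwards path always chooses $x(s)+1$ (resp. $x(s)-1$) when this choice is allowed. *)

theory Defs
  imports Complex_Main
begin

text \<open>A realisation of the Poisson clocks is a family
  P :: int => real set (ring times at each site). We work pathwise under the
  almost-sure properties: ring times are positive, locally finite at each site,
  and different sites never ring simultaneously.\<close>

definition clocks_ok :: "(int \<Rightarrow> real set) \<Rightarrow> bool" where
  "clocks_ok P \<longleftrightarrow>
     (\<forall>z. P z \<subseteq> {0<..}) \<and>
     (\<forall>z a b. finite (P z \<inter> {a..b})) \<and>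
     (\<forall>z w. z \<noteq> w \<longrightarrow> P z \<inter> P w = {})"

text \<open>f is constant equal to v on a left neighbourhood of s (restricted to times
  after the starting time t0): the left limit f(s^-) = v.\<close>
definition left_limit :: "real \<Rightarrow> (real \<Rightarrow> 'a) \<Rightarrow> real \<Rightarrow> 'a \<Rightarrow> bool" where
  "left_limit t0 f s v \<longleftrightarrow> (\<exists>\<epsilon>>0. \<forall>u. s - \<epsilon> < u \<and> u < s \<and> t0 < u \<longrightarrow> f u = v)"

definition leftval :: "real \<Rightarrow> (real \<Rightarrow> 'a) \<Rightarrow> real \<Rightarrow> 'a" where
  "leftval t0 f s = (THE v. left_limit t0 f s v)"

text \<open>h is the height function (h j s = h(j,s)) of a TASEP started at time t0
  (from the arbitrary initial configuration encoded by h(.,t0)) and driven by the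
  clocks P: slopes are +-1 (h(j)-h(j-1) = 1 - 2 eta(j)), h(j,.) is right-continuous
  and piecewise constant, changes only at rings of P j, and at a ring of P j it
  increases by 2 iff a particle jumps from j to j+1, i.e. iff at time s^- site j is
  occupied and site j+1 is empty.\<close>
definition tasep_height :: "(int \<Rightarrow> real set) \<Rightarrow> real \<Rightarrow> (int \<Rightarrow> real \<Rightarrow> int) \<Rightarrow> bool" where
  "tasep_height P t0 h \<longleftrightarrow>
     (\<forall>j s. t0 \<le> s \<longrightarrow> h j s - h (j - 1) s = 1 \<or> h j s - h (j - 1) s = -1) \<and>
     (\<forall>j s. t0 \<le> s \<longrightarrow> (\<exists>\<epsilon>>0. \<forall>u. s \<le> u \<and> u < s + \<epsilon> \<longrightarrow> h j u = h j s)) \<and>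
     (\<forall>j s. t0 < s \<longrightarrow> (\<exists>v. left_limit t0 (h j) s v)) \<and>
     (\<forall>j s. t0 < s \<longrightarrow>
        (let a = leftval t0 (h (j - 1)) s;
             b = leftval t0 (h j) s;
             c = leftval t0 (h (j + 1)) s
         in h j s = (if s \<in> P j \<and> b - a = -1 \<and> c - b = 1 then b + 2 else b)))"

text \<open>The height function of the TASEP started at time tau from step initial
  condition (particles on sites <= y, holes on sites > y).\<close>
definition step_height :: "(int \<Rightarrow> real set) \<Rightarrow> int \<Rightarrow> real \<Rightarrow> (int \<Rightarrow> real \<Rightarrow> int) \<Rightarrow> bool" where
  "step_height P y \<tau> h \<longleftrightarrow> tasep_height P \<tau> h \<and> (\<forall>j. h j \<tau> = \<bar>j - y\<bar>)"

text \<open>Backwards path with respect to h (whose TASEP starts at time t0), started at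
  time t from position x0, defined on [t0,t]. The flag rightmost adds the rule that
  x(s)+1 is chosen whenever allowed.\<close>
definition backwards_path_gen ::
  "bool \<Rightarrow> (int \<Rightarrow> real set) \<Rightarrow> real \<Rightarrow> (int \<Rightarrow> real \<Rightarrow> int) \<Rightarrow> real \<Rightarrow> int \<Rightarrow> (real \<Rightarrow> int) \<Rightarrow> bool" where
  "backwards_path_gen rightmost P t0 h t x0 x \<longleftrightarrow>
     x t = x0 \<and>
     (\<forall>s. t0 \<le> s \<and> s < t \<longrightarrow> (\<exists>\<epsilon>>0. \<forall>u. s \<le> u \<and> u < s + \<epsilon> \<longrightarrow> x u = x s)) \<and>
     (\<forall>s. t0 < s \<and> s \<le> t \<longrightarrow>
        (\<exists>y. left_limit t0 x s y \<and>
           (s \<notin> P (x s) \<longrightarrow> y = x s) \<and>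
           (s \<in> P (x s) \<longrightarrow>
              (if h (x s) s = leftval t0 (h (x s)) s + 2 then y = x s
               else (y = x s - 1 \<or> y = x s + 1) \<and> h y s = h (x s) s - 1 \<and>
                    (rightmost \<and> h (x s + 1) s = h (x s) s - 1 \<longrightarrow> y = x s + 1)))))"

abbreviation backwards_path where "backwards_path \<equiv> backwards_path_gen False"
abbreviation rightmost_backwards_path where "rightmost_backwards_path \<equiv> backwards_path_gen True"

end

theory Submission
  imports Defs
begin


lemma ev_left_less: "\<forall>\<^sub>F u in at_left (s::real). u < s \<and> c < u" if "c < s"
  using that unfolding eventually_at_left_field by (intro exI[of _ c]) auto

lemma ev_right_less: "\<forall>\<^sub>F u in at_right (s::real). s < u \<and> u < c" if "s < c"
  using that unfolding eventually_at_right_field by (intro exI[of _ c]) auto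

lemma ev_left_obtain:
  assumes "\<forall>\<^sub>F u in at_left (s::real). Q u"
  obtains u where "Q u"
  using eventually_happens'[OF trivial_limit_at_left_real assms] by blast

lemma ev_right_obtain:
  assumes "\<forall>\<^sub>F u in at_right (s::real). Q u"
  obtains u where "Q u"
  using eventually_happens'[OF trivial_limit_at_right_real assms] by blast

lemma left_limit_ev:
  assumes "left_limit t0 f s v" "t0 < s"
  shows "\<forall>\<^sub>F u in at_left s. f u = v"
proof -
  obtain e where e: "e > 0" "\<forall>u. s - e < u \<and> u < s \<and> t0 < u \<longrightarrow> f u = v"
    using assms(1) unfolding left_limit_def by blast
  show ?thesis unfolding eventually_at_left_field
    using e assms(2) by (intro exI[of _ "max (s - e) t0"]) auto
qed

lemma leftval_eq:
  assumes "left_limit t0 f s v" "t0 < s"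
  shows "leftval t0 f s = v"
proof -
  have "left_limit t0 f s w \<Longrightarrow> w = v" for w
  proof -
    assume w: "left_limit t0 f s w"
    have "\<forall>\<^sub>F u in at_left s. f u = v \<and> f u = w"
      using left_limit_ev[OF assms] left_limit_ev[OF w assms(2)] by (rule eventually_conj)
    then obtain u where "f u = v \<and> f u = w" by (rule ev_left_obtain)
    then show ?thesis by metis
  qed
  then show ?thesis unfolding leftval_def using assms(1) by (rule the_equality[rotated])
qed

lemma right_ev:
  assumes "\<exists>\<epsilon>>0. \<forall>u. s \<le> u \<and> u < s + \<epsilon> \<longrightarrow> f u = f s"
  shows "\<forall>\<^sub>F u in at_right (s::real). f u = f s"
  using assms unfolding eventually_at_right_field
  by (metis add.commute le_less less_add_same_cancel2)

lemma TH_right: "tasep_height P t0 h \<Longrightarrow> t0 \<le> s \<Longrightarrow> \<forall>\<^sub>F u in at_right s. h j u = h j s"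
  unfolding tasep_height_def by (intro right_ev) blast

lemma TH_slope: "tasep_height P t0 h \<Longrightarrow> t0 \<le> s \<Longrightarrow> h j s - h (j - 1) s = 1 \<or> h j s - h (j - 1) s = -1"
  unfolding tasep_height_def by blast

lemma TH_ll: "tasep_height P t0 h \<Longrightarrow> t0 < s \<Longrightarrow> left_limit t0 (h j) s (leftval t0 (h j) s)"
  unfolding tasep_height_def using leftval_eq by metis

lemma TH_left: "tasep_height P t0 h \<Longrightarrow> t0 < s \<Longrightarrow> \<forall>\<^sub>F u in at_left s. h j u = leftval t0 (h j) s"
  using TH_ll left_limit_ev by metis

lemma TH_left_slope:
  assumes "tasep_height P t0 h" "t0 < s"
  shows "leftval t0 (h j) s - leftval t0 (h (j - 1)) s = 1 \<or> leftval t0 (h j) s - leftval t0 (h (j - 1)) s = -1"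
proof -
  have "\<forall>\<^sub>F u in at_left s. h j u = leftval t0 (h j) s \<and> h (j-1) u = leftval t0 (h (j-1)) s \<and> (u < s \<and> t0 < u)"
    using TH_left[OF assms, of j] TH_left[OF assms, of "j-1"] ev_left_less[OF assms(2)]
    by (auto elim: eventually_elim2 eventually_mono intro: eventually_conj)
  then obtain u where u: "h j u = leftval t0 (h j) s" "h (j-1) u = leftval t0 (h (j-1)) s" "t0 < u"
    by (rule ev_left_obtain) blast
  show ?thesis using TH_slope[OF assms(1), of u j] u by simp
qed

lemma TH_step:
  assumes "tasep_height P t0 h" "t0 < s"
  shows "h j s = (if s \<in> P j \<and> leftval t0 (h j) s - leftval t0 (h (j - 1)) s = -1 \<and>
                      leftval t0 (h (j + 1)) s - leftval t0 (h j) s = 1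
                   then leftval t0 (h j) s + 2 else leftval t0 (h j) s)"
  using assms unfolding tasep_height_def Let_def by blast

lemma real_induct_fwd:
  fixes a b :: real
  assumes "a \<le> b" "P a"
    and step: "\<And>s. a \<le> s \<Longrightarrow> s < b \<Longrightarrow> (\<forall>u. a \<le> u \<and> u \<le> s \<longrightarrow> P u) \<Longrightarrow> \<exists>e>0. \<forall>u. s < u \<and> u < s + e \<longrightarrow> P u"
    and lim: "\<And>s. a < s \<Longrightarrow> s \<le> b \<Longrightarrow> (\<forall>u. a \<le> u \<and> u < s \<longrightarrow> P u) \<Longrightarrow> P s"
  shows "\<forall>s. a \<le> s \<and> s \<le> b \<longrightarrow> P s"
proof -
  define S where "S = {s. a \<le> s \<and> s \<le> b \<and> (\<forall>u. a \<le> u \<and> u \<le> s \<longrightarrow> P u)}"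
  have aS: "a \<in> S" using assms(1,2) unfolding S_def by auto
  have bdd: "bdd_above S" unfolding S_def bdd_above_def by auto
  define c where "c = Sup S"
  have ac: "a \<le> c" unfolding c_def using aS bdd by (rule cSup_upper)
  have cb: "c \<le> b" unfolding c_def using aS by (intro cSup_least) (auto simp: S_def)
  have below: "P u" if uu: "a \<le> u" "u < c" for u
  proof -
    obtain s where "s \<in> S" "u < s" using less_cSupD[of S u] aS uu(2) unfolding c_def by blast
    then show ?thesis using uu unfolding S_def by auto
  qed
  have Pc: "P c"
  proof (cases "a < c")
    case True then show ?thesis using lim[OF True cb] below by blast
  next
    case False then show ?thesis using ac assms(2) by auto
  qed
  have cS: "\<forall>u. a \<le> u \<and> u \<le> c \<longrightarrow> P u" using below Pc by (auto simp: le_less)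
  have "c = b"
  proof (rule ccontr)
    assume "c \<noteq> b" then have "c < b" using cb by simp
    then obtain e where e: "e > 0" "\<forall>u. c < u \<and> u < c + e \<longrightarrow> P u" using step[OF ac _ cS] by blast
    define d where "d = min (c + e/2) b"
    have d1: "c < d" "d \<le> b" "d < c + e" unfolding d_def using e \<open>c < b\<close> by auto
    have "P u" if "a \<le> u" "u \<le> d" for u
    proof (cases "u \<le> c")
      case True then show ?thesis using cS that by auto
    next
      case False then show ?thesis using e(2) d1 that by auto
    qed
    then have "d \<in> S" unfolding S_def using d1 ac by auto
    then have "d \<le> c" unfolding c_def using bdd by (rule cSup_upper)
    then show False using e \<open>c < b\<close> unfolding d_def by (auto simp: min_def split: if_splits)
  qed
  then show ?thesis using cS by auto
qed



lemma real_induct_bwd: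
  fixes a b :: real
  assumes "a \<le> b" "Q b"
    and step: "\<And>s. a < s \<Longrightarrow> s \<le> b \<Longrightarrow> (\<forall>u. s \<le> u \<and> u \<le> b \<longrightarrow> Q u) \<Longrightarrow> \<exists>e>0. \<forall>u. s - e < u \<and> u < s \<longrightarrow> Q u"
    and lim: "\<And>s. a \<le> s \<Longrightarrow> s < b \<Longrightarrow> (\<forall>u. s < u \<and> u \<le> b \<longrightarrow> Q u) \<Longrightarrow> Q s"
  shows "\<forall>s. a \<le> s \<and> s \<le> b \<longrightarrow> Q s"
proof -
  have "\<forall>s. -b \<le> s \<and> s \<le> -a \<longrightarrow> Q (- s)"
  proof (rule real_induct_fwd)
    show "-b \<le> -a" using assms(1) by simp
    show "Q (- (- b))" using assms(2) by simp
  next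
    fix s assume s: "-b \<le> s" "s < -a" "\<forall>u. -b \<le> u \<and> u \<le> s \<longrightarrow> Q (- u)"
    have "\<forall>u. -s \<le> u \<and> u \<le> b \<longrightarrow> Q u" proof (intro allI impI)
      fix u assume "-s \<le> u \<and> u \<le> b" then show "Q u" using s(3)[rule_format, of "-u"] by simp
    qed
    then obtain e where e: "e > 0" "\<forall>u. -s - e < u \<and> u < -s \<longrightarrow> Q u" using step[of "-s"] s by auto
    show "\<exists>e>0. \<forall>u. s < u \<and> u < s + e \<longrightarrow> Q (- u)"
      using e by (intro exI[of _ e]) auto
  next
    fix s assume s: "-b < s" "s \<le> -a" "\<forall>u. -b \<le> u \<and> u < s \<longrightarrow> Q (- u)"
    have "\<forall>u. -s < u \<and> u \<le> b \<longrightarrow> Q u" proof (intro allI impI)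
      fix u assume "-s < u \<and> u \<le> b" then show "Q u" using s(3)[rule_format, of "-u"] by simp
    qed
    then show "Q (- s)" using lim[of "-s"] s by auto
  qed
  then show ?thesis
  proof (intro allI impI)
    fix s assume "\<forall>s. -b \<le> s \<and> s \<le> -a \<longrightarrow> Q (- s)" "a \<le> s \<and> s \<le> b"
    then show "Q s" by (metis minus_minus neg_le_iff_le)
  qed
qed

lemma TH_mono:
  assumes th: "tasep_height P t0 h" and "t0 \<le> v" "v \<le> w"
  shows "h j v \<le> h j w"
proof -
  have "\<forall>s. v \<le> s \<and> s \<le> w \<longrightarrow> h j v \<le> h j s"
  proof (rule real_induct_fwd)
    show "v \<le> w" "h j v \<le> h j v" using assms by auto
  next
    fix s assume s: "v \<le> s" "s < w" "\<forall>u. v \<le> u \<and> u \<le> s \<longrightarrow> h j v \<le> h j u"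
    have "\<forall>j s. t0 \<le> s \<longrightarrow> (\<exists>\<epsilon>>0. \<forall>u. s \<le> u \<and> u < s + \<epsilon> \<longrightarrow> h j u = h j s)"
      using th unfolding tasep_height_def by (elim conjE) assumption
    then have "\<exists>\<epsilon>>0. \<forall>u. s \<le> u \<and> u < s + \<epsilon> \<longrightarrow> h j u = h j s"
      using s(1) assms(2) by auto
    then obtain e where e: "e>0" "\<forall>u. s \<le> u \<and> u < s + e \<longrightarrow> h j u = h j s" by blast
    have "h j v \<le> h j s" using s(3) s(1) by auto
    then have "\<forall>u. s < u \<and> u < s + e \<longrightarrow> h j v \<le> h j u" using e(2) by (metis less_eq_real_def)
    then show "\<exists>e>0. \<forall>u. s < u \<and> u < s + e \<longrightarrow> h j v \<le> h j u" using e(1) by blast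
  next
    fix s assume s: "v < s" "s \<le> w" "\<forall>u. v \<le> u \<and> u < s \<longrightarrow> h j v \<le> h j u"
    have ts: "t0 < s" using s assms by auto
    have "\<forall>\<^sub>F u in at_left s. h j u = leftval t0 (h j) s \<and> (u < s \<and> v < u)"
      using TH_left[OF th ts, of j] ev_left_less[OF s(1)] by (rule eventually_conj)
    then obtain u where u: "h j u = leftval t0 (h j) s" "u < s" "v < u" by (rule ev_left_obtain) blast
    have "leftval t0 (h j) s \<le> h j s" using TH_step[OF th ts, of j] by auto
    moreover have "h j v \<le> h j u" using s(3) u(2,3) by auto
    ultimately show "h j v \<le> h j s" using u(1) by linarith
  qed
  then show ?thesis using assms by auto
qed

lemma spatial_mono:
  fixes h :: "int \<Rightarrow> int"
  assumes "\<And>k. h k - h (k - 1) = 1 \<or> h k - h (k - 1) = -1" "i \<le> j"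
  shows "h i + i \<le> h j + j"
proof -
  have "h i + i \<le> h (i + int n) + (i + int n)" for n
  proof (induction n)
    case 0 then show ?case by simp
  next
    case (Suc n)
    have "h (i + int (Suc n)) - h (i + int (Suc n) - 1) = 1 \<or> h (i + int (Suc n)) - h (i + int (Suc n) - 1) = -1"
      using assms(1) by blast
    moreover have "i + int (Suc n) - 1 = i + int n" by simp
    ultimately show ?case using Suc by auto
  qed
  from this[of "nat (j - i)"] show ?thesis using assms(2) by simp
qed

lemma BP_right:
  assumes "backwards_path_gen r P t0 h t x0 x" "t0 \<le> s" "s < t"
  shows "\<forall>\<^sub>F u in at_right s. x u = x s"
  proof (intro right_ev)
  have "\<forall>s. t0 \<le> s \<and> s < t \<longrightarrow> (\<exists>\<epsilon>>0. \<forall>u. s \<le> u \<and> u < s + \<epsilon> \<longrightarrow> x u = x s)"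
    using assms(1) unfolding backwards_path_gen_def by (elim conjE) assumption
  then show "\<exists>\<epsilon>>0. \<forall>u. s \<le> u \<and> u < s + \<epsilon> \<longrightarrow> x u = x s" using assms(2,3) by blast
qed

lemma BP_left:
  assumes "backwards_path_gen r P t0 h t x0 x" "t0 < s" "s \<le> t"
  obtains y where "left_limit t0 x s y"
    "s \<notin> P (x s) \<Longrightarrow> y = x s"
    "s \<in> P (x s) \<Longrightarrow> h (x s) s = leftval t0 (h (x s)) s + 2 \<Longrightarrow> y = x s"
    "s \<in> P (x s) \<Longrightarrow> h (x s) s \<noteq> leftval t0 (h (x s)) s + 2 \<Longrightarrow>
       (y = x s - 1 \<or> y = x s + 1) \<and> h y s = h (x s) s - 1 \<and>
       (r \<and> h (x s + 1) s = h (x s) s - 1 \<longrightarrow> y = x s + 1)"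
  proof -
  obtain y where "left_limit t0 x s y \<and>
           (s \<notin> P (x s) \<longrightarrow> y = x s) \<and>
           (s \<in> P (x s) \<longrightarrow>
              (if h (x s) s = leftval t0 (h (x s)) s + 2 then y = x s
               else (y = x s - 1 \<or> y = x s + 1) \<and> h y s = h (x s) s - 1 \<and>
                    (r \<and> h (x s + 1) s = h (x s) s - 1 \<longrightarrow> y = x s + 1)))"
    using assms unfolding backwards_path_gen_def by blast
  then show ?thesis using that by (metis (no_types, lifting))
qed

lemma clocks_disj: "clocks_ok P \<Longrightarrow> s \<in> P a \<Longrightarrow> s \<in> P b \<Longrightarrow> a = b"
  unfolding clocks_ok_def by blast



lemma local_minus:
  fixes hL sL :: "int \<Rightarrow> int" and hj hjm sj sjm :: int and j :: int
  assumes Hj: "hj = (if pj \<and> hL j - hL (j-1) = -1 \<and> hL (j+1) - hL j = 1 then hL j + 2 else hL j)"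
    and Hjm: "hjm = (if pjm \<and> hL (j-1) - hL (j-1-1) = -1 \<and> hL j - hL (j-1) = 1 then hL (j-1) + 2 else hL (j-1))"
    and Sj: "sj = (if pj \<and> sL j - sL (j-1) = -1 \<and> sL (j+1) - sL j = 1 then sL j + 2 else sL j)"
    and Sjm: "sjm = (if pjm \<and> sL (j-1) - sL (j-1-1) = -1 \<and> sL j - sL (j-1) = 1 then sL (j-1) + 2 else sL (j-1))"
    and sl: "\<And>k. k \<in> {j-1, j, j+1} \<Longrightarrow> (hL k - hL (k-1) = 1 \<or> hL k - hL (k-1) = -1) \<and> (sL k - sL (k-1) = 1 \<or> sL k - sL (k-1) = -1)"
    and m: "hj - hjm = -1" "sj - sjm = 1"
    and nd: "\<not> (pj \<and> pjm)"
  shows "(\<not> pj \<and> \<not> pjm \<longrightarrow> hL j - hL (j-1) = -1 \<and> sL j - sL (j-1) = 1)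
       \<and> (pj \<longrightarrow> hj = hL j \<and> ((hL j - hL (j-1) = -1 \<and> sL j - sL (j-1) = 1) \<or> (hL (j+1) - hL j = -1 \<and> sL (j+1) - sL j = 1)))
       \<and> (pjm \<longrightarrow> (hL j - hL (j-1) = -1 \<and> sL j - sL (j-1) = 1) \<or> (hL (j-1) - hL (j-1-1) = -1 \<and> sL (j-1) - sL (j-1-1) = 1))"
proof -
  have a: "(hL k - hL (k-1) = 1 \<or> hL k - hL (k-1) = -1) \<and> (sL k - sL (k-1) = 1 \<or> sL k - sL (k-1) = -1)"
    if "k = j-1 \<or> k = j \<or> k = j+1" for k using sl that by blast
  note a1 = a[of "j-1"] and a2 = a[of j] and a3 = a[of "j+1"]
  show ?thesis using Hj Hjm Sj Sjm a1 a2 a3 m nd by (auto split: if_splits)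
qed



lemma no_minus:
  assumes ck: "clocks_ok P" and th: "tasep_height P 0 h" and bp: "backwards_path P 0 h t x0 x"
    and t1: "0 \<le> t1" "t1 \<le> t2" "t2 \<le> t" and xt1: "x t1 \<le> x1" and sh: "step_height P x1 t1 hs"
  shows "\<forall>w. t1 \<le> w \<and> w \<le> t2 \<longrightarrow> (\<forall>j. j \<le> x w \<longrightarrow> \<not> (h j w - h (j-1) w = -1 \<and> hs j w - hs (j-1) w = 1))"
proof -
  have ths: "tasep_height P t1 hs" and hs0: "\<And>j. hs j t1 = \<bar>j - x1\<bar>" using sh unfolding step_height_def by auto
  show ?thesis
  proof (rule real_induct_fwd)
    show "t1 \<le> t2" using t1 by simp
    show "\<forall>j. j \<le> x t1 \<longrightarrow> \<not> (h j t1 - h (j-1) t1 = -1 \<and> hs j t1 - hs (j-1) t1 = 1)"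
    proof (intro allI impI)
      fix j assume "j \<le> x t1"
      then have "j \<le> x1" using xt1 by simp
      then have "hs j t1 - hs (j-1) t1 = -1" using hs0[of j] hs0[of "j-1"] by simp
      then show "\<not> (h j t1 - h (j-1) t1 = -1 \<and> hs j t1 - hs (j-1) t1 = 1)" by simp
    qed
  next
    fix s assume s: "t1 \<le> s" "s < t2"
      and IH: "\<forall>u. t1 \<le> u \<and> u \<le> s \<longrightarrow> (\<forall>j. j \<le> x u \<longrightarrow> \<not> (h j u - h (j-1) u = -1 \<and> hs j u - hs (j-1) u = 1))"
    have Ps: "\<forall>j. j \<le> x s \<longrightarrow> \<not> (h j s - h (j-1) s = -1 \<and> hs j s - hs (j-1) s = 1)"
      using IH s by blast
    have hsge: "x1 \<le> hs j s + j" if "j \<le> x1" for j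
      using TH_mono[OF ths order.refl s(1), of j] hs0[of j] that by simp
    obtain j1 where j1a: "j1 \<le> x1" and j1b: "\<forall>y. y \<le> x1 \<longrightarrow> nat (hs j1 s + j1 - x1) \<le> nat (hs y s + y - x1)"
      using ex_has_least_nat[of "\<lambda>j. j \<le> x1" x1 "\<lambda>j. nat (hs j s + j - x1)"] by auto
    have j1: "hs j1 s + j1 \<le> hs j s + j" if "j \<le> x1" for j
      using j1b[rule_format, OF that] hsge[OF that] hsge[OF j1a] by linarith
    have s0: "0 \<le> s" "s < t" using s t1 by auto
    have fin: "finite {j1<..x s}" by simp
    have e1: "\<forall>\<^sub>F u in at_right s. h j u = h j s" for j using TH_right[OF th s0(1)] .
    have e2: "\<forall>\<^sub>F u in at_right s. hs j u = hs j s" for j using TH_right[OF ths s(1)] .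
    have e3: "\<forall>\<^sub>F u in at_right s. x u = x s" using BP_right[OF bp s0] .
    have e4: "\<forall>\<^sub>F u in at_right s. (\<forall>j\<in>{j1<..x s}. h j u = h j s \<and> h (j-1) u = h (j-1) s \<and> hs j u = hs j s \<and> hs (j-1) u = hs (j-1) s)"
      using fin by (rule eventually_ball_finite) (auto intro!: eventually_conj e1 e2)
    have ev: "\<forall>\<^sub>F u in at_right s. x u = x s \<and> hs j1 u = hs j1 s \<and>
       (\<forall>j\<in>{j1<..x s}. h j u = h j s \<and> h (j-1) u = h (j-1) s \<and> hs j u = hs j s \<and> hs (j-1) u = hs (j-1) s)"
      using e3 e2[of j1] e4 by (intro eventually_conj)
    then obtain b where b: "b > s" and bb: "\<And>u. s < u \<Longrightarrow> u < b \<Longrightarrow> x u = x s \<and> hs j1 u = hs j1 s \<and>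
       (\<forall>j\<in>{j1<..x s}. h j u = h j s \<and> h (j-1) u = h (j-1) s \<and> hs j u = hs j s \<and> hs (j-1) u = hs (j-1) s)"
      unfolding eventually_at_right_field by blast
    show "\<exists>e>0. \<forall>u. s < u \<and> u < s + e \<longrightarrow> (\<forall>j. j \<le> x u \<longrightarrow> \<not> (h j u - h (j-1) u = -1 \<and> hs j u - hs (j-1) u = 1))"
    proof (intro exI[of _ "b - s"] conjI allI impI notI)
      show "0 < b - s" using b by simp
      fix u j assume u: "s < u \<and> u < s + (b - s)" and j: "j \<le> x u"
        and mj: "h j u - h (j-1) u = -1 \<and> hs j u - hs (j-1) u = 1"
      have U: "x u = x s" "hs j1 u = hs j1 s"
        "\<And>j. j\<in>{j1<..x s} \<Longrightarrow> h j u = h j s \<and> h (j-1) u = h (j-1) s \<and> hs j u = hs j s \<and> hs (j-1) u = hs (j-1) s"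
        using bb[of u] u by auto
      show False
      proof (cases "j \<le> j1")
        case True
        have "hs (j-1) s \<le> hs (j-1) u" using TH_mono[OF ths s(1), of u "j-1"] u by simp
        moreover have "hs j1 s + j1 \<le> hs (j-1) s + (j-1)" using j1[of "j-1"] True j1a by simp
        moreover have "hs j u + j \<le> hs j1 u + j1"
          using spatial_mono[of "\<lambda>k. hs k u" j j1] TH_slope[OF ths, of u] u s True by auto
        ultimately show False using U(2) mj by linarith
      next
        case False
        then have "j \<in> {j1<..x s}" using j U(1) by simp
        from U(3)[OF this] mj Ps j U(1) show False by auto
      qed
    qed
  next
    fix s assume s: "t1 < s" "s \<le> t2"
      and IH: "\<forall>u. t1 \<le> u \<and> u < s \<longrightarrow> (\<forall>j. j \<le> x u \<longrightarrow> \<not> (h j u - h (j-1) u = -1 \<and> hs j u - hs (j-1) u = 1))"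
    show "\<forall>j. j \<le> x s \<longrightarrow> \<not> (h j s - h (j-1) s = -1 \<and> hs j s - hs (j-1) s = 1)"
    proof (intro allI impI notI)
      fix j assume j: "j \<le> x s" and m: "h j s - h (j-1) s = -1 \<and> hs j s - hs (j-1) s = 1"
      have s0: "0 < s" "s \<le> t" using s t1 by auto
      obtain y where yll: "left_limit 0 x s y"
        and y1: "s \<notin> P (x s) \<Longrightarrow> y = x s"
        and y2: "s \<in> P (x s) \<Longrightarrow> h (x s) s = leftval 0 (h (x s)) s + 2 \<Longrightarrow> y = x s"
        and y3: "s \<in> P (x s) \<Longrightarrow> h (x s) s \<noteq> leftval 0 (h (x s)) s + 2 \<Longrightarrow>
           (y = x s - 1 \<or> y = x s + 1) \<and> h y s = h (x s) s - 1"
        using BP_left[OF bp s0] by metis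
      define hL where "hL k = leftval 0 (h k) s" for k
      define sL where "sL k = leftval t1 (hs k) s" for k
      have fin: "finite {j-2..j+1}" by simp
      have ev: "\<forall>\<^sub>F u in at_left s. x u = y \<and> (\<forall>k\<in>{j-2..j+1}. h k u = hL k \<and> hs k u = sL k) \<and> (u < s \<and> t1 < u)"
      proof -
        have e1: "\<forall>\<^sub>F u in at_left s. h k u = hL k" for k unfolding hL_def using TH_left[OF th s0(1)] .
        have e2: "\<forall>\<^sub>F u in at_left s. hs k u = sL k" for k unfolding sL_def using TH_left[OF ths s(1)] .
        have e3: "\<forall>\<^sub>F u in at_left s. (\<forall>k\<in>{j-2..j+1}. h k u = hL k \<and> hs k u = sL k)"
          using fin by (rule eventually_ball_finite) (auto intro!: eventually_conj e1 e2)
        show ?thesis using left_limit_ev[OF yll s0(1)] e3 ev_left_less[OF s(1)] by (simp add: eventually_conj_iff)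
      qed
      then obtain u where u1: "x u = y" and u2: "\<forall>k\<in>{j-2..j+1}. h k u = hL k \<and> hs k u = sL k"
        and u3: "u < s" "t1 < u"
        by (rule ev_left_obtain) blast
      have Pu: "\<forall>j. j \<le> x u \<longrightarrow> \<not> (h j u - h (j-1) u = -1 \<and> hs j u - hs (j-1) u = 1)"
        using IH u3 by auto
      have P': "\<not> (hL k - hL (k-1) = -1 \<and> sL k - sL (k-1) = 1)" if "k \<in> {j-1..j+1}" "k \<le> y" for k
      proof -
        have "k \<in> {j-2..j+1}" "k - 1 \<in> {j-2..j+1}" using that by auto
        then show ?thesis using Pu[rule_format, of k] u1 u2 that(2) by auto
      qed
      have Hj: "h j s = (if s \<in> P j \<and> hL j - hL (j-1) = -1 \<and> hL (j+1) - hL j = 1 then hL j + 2 else hL j)"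
        using TH_step[OF th s0(1), of j] unfolding hL_def by simp
      have Hjm: "h (j-1) s = (if s \<in> P (j-1) \<and> hL (j-1) - hL (j-1-1) = -1 \<and> hL j - hL (j-1) = 1 then hL (j-1) + 2 else hL (j-1))"
        using TH_step[OF th s0(1), of "j-1"] unfolding hL_def by simp
      have Sj: "hs j s = (if s \<in> P j \<and> sL j - sL (j-1) = -1 \<and> sL (j+1) - sL j = 1 then sL j + 2 else sL j)"
        using TH_step[OF ths s(1), of j] unfolding sL_def by simp
      have Sjm: "hs (j-1) s = (if s \<in> P (j-1) \<and> sL (j-1) - sL (j-1-1) = -1 \<and> sL j - sL (j-1) = 1 then sL (j-1) + 2 else sL (j-1))"
        using TH_step[OF ths s(1), of "j-1"] unfolding sL_def by simp
      have sl: "(hL k - hL (k-1) = 1 \<or> hL k - hL (k-1) = -1) \<and> (sL k - sL (k-1) = 1 \<or> sL k - sL (k-1) = -1)" for k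
        unfolding hL_def sL_def using TH_left_slope[OF th s0(1), of k] TH_left_slope[OF ths s(1), of k] by blast
      have nd: "\<not> (s \<in> P j \<and> s \<in> P (j-1))" using clocks_disj[OF ck, of s j "j-1"] by auto
      have L: "(\<not> s \<in> P j \<and> \<not> s \<in> P (j-1) \<longrightarrow> hL j - hL (j-1) = -1 \<and> sL j - sL (j-1) = 1)
       \<and> (s \<in> P j \<longrightarrow> h j s = hL j \<and> ((hL j - hL (j-1) = -1 \<and> sL j - sL (j-1) = 1) \<or> (hL (j+1) - hL j = -1 \<and> sL (j+1) - sL j = 1)))
       \<and> (s \<in> P (j-1) \<longrightarrow> (hL j - hL (j-1) = -1 \<and> sL j - sL (j-1) = 1) \<or> (hL (j-1) - hL (j-1-1) = -1 \<and> sL (j-1) - sL (j-1-1) = 1))"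
        by (rule local_minus[OF Hj Hjm Sj Sjm _ conjunct1[OF m] conjunct2[OF m] nd]) (use sl in blast)
      have Pj: "\<not> (hL j - hL (j-1) = -1 \<and> sL j - sL (j-1) = 1)" if "j \<le> y" using P'[of j] that by simp
      have Pj1: "\<not> (hL (j+1) - hL (j+1-1) = -1 \<and> sL (j+1) - sL (j+1-1) = 1)" if "j+1 \<le> y" using P'[of "j+1"] that by simp
      have Pjm: "\<not> (hL (j-1) - hL (j-1-1) = -1 \<and> sL (j-1) - sL (j-1-1) = 1)" if "j-1 \<le> y" using P'[of "j-1"] that by simp
      have ybounds: "x s - 1 \<le> y" using y1 y2 y3 by (cases "s \<in> P (x s)"; cases "h (x s) s = leftval 0 (h (x s)) s + 2") auto
      show False
      proof (cases "x s = j")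
        case False
        then have xs: "j + 1 \<le> x s" using j by simp
        have "s \<in> P j \<Longrightarrow> y = x s" using y1 clocks_disj[OF ck, of s j "x s"] False by auto
        then show False using L Pj Pj1 Pjm xs ybounds by auto
      next
        case True
        have yA: "s \<notin> P j \<Longrightarrow> y = j" using y1 True by simp
        have yB: "s \<in> P j \<Longrightarrow> h j s = hL j \<Longrightarrow> y = j + 1"
        proof -
          assume a: "s \<in> P j" "h j s = hL j"
          have "h j s \<noteq> leftval 0 (h j) s + 2" using a(2) unfolding hL_def by simp
          then have "(y = j - 1 \<or> y = j + 1) \<and> h y s = h j s - 1" using y3 a(1) True by simp
          then show "y = j + 1" using m by auto
        qed
        show False using L Pj Pj1 Pjm yA yB nd by auto
      qed
    qed
  qed
qed



theorem proposition2p1: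
  fixes P :: "int \<Rightarrow> real set"
    and h hs :: "int \<Rightarrow> real \<Rightarrow> int"
    and x xr :: "real \<Rightarrow> int"
    and t t1 t2 :: real and x0 x1 x2 :: int
  assumes "clocks_ok P"
    and "tasep_height P 0 h"
    and "backwards_path P 0 h t x0 x"
    and "0 \<le> t1" and "t1 < t2" and "t2 \<le> t"
    and "x t1 \<le> x1" and "x t2 \<le> x2"
    and "step_height P x1 t1 hs"
    and "rightmost_backwards_path P t1 hs t2 x2 xr"
  shows "\<forall>\<tau>. t1 \<le> \<tau> \<and> \<tau> \<le> t2 \<longrightarrow> x \<tau> \<le> xr \<tau>"
proof -
  note ck = assms(1) and th = assms(2) and bp = assms(3) and rbp = assms(10)
  have ths: "tasep_height P t1 hs" using assms(9) unfolding step_height_def by auto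
  have L: "\<forall>w. t1 \<le> w \<and> w \<le> t2 \<longrightarrow> (\<forall>j. j \<le> x w \<longrightarrow> \<not> (h j w - h (j-1) w = -1 \<and> hs j w - hs (j-1) w = 1))"
    using no_minus[OF ck th bp assms(4) _ assms(6,7,9)] assms(5) by simp
  have xrt2: "xr t2 = x2" using rbp unfolding backwards_path_gen_def by blast
  show ?thesis
  proof (rule real_induct_bwd)
    show "t1 \<le> t2" using assms(5) by simp
    show "x t2 \<le> xr t2" using xrt2 assms(8) by simp
  next
    fix s assume s: "t1 \<le> s" "s < t2" and IH: "\<forall>u. s < u \<and> u \<le> t2 \<longrightarrow> x u \<le> xr u"
    have s0: "0 \<le> s" "s < t" using s assms by auto
    have "\<forall>\<^sub>F u in at_right s. x u = x s \<and> xr u = xr s \<and> (s < u \<and> u < t2)"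
      using BP_right[OF bp s0] BP_right[OF rbp s] ev_right_less[OF s(2)] by (simp add: eventually_conj_iff)
    then obtain u where "x u = x s" "xr u = xr s" "s < u" "u < t2" by (rule ev_right_obtain) blast
    then show "x s \<le> xr s" using IH by force
  next
    fix s assume s: "t1 < s" "s \<le> t2" and IH: "\<forall>u. s \<le> u \<and> u \<le> t2 \<longrightarrow> x u \<le> xr u"
    have Qs: "x s \<le> xr s" using IH s by auto
    have s0: "0 < s" "s \<le> t" using s assms by auto
    obtain ya where yall: "left_limit 0 x s ya"
        and ya1: "s \<notin> P (x s) \<Longrightarrow> ya = x s"
        and ya2: "s \<in> P (x s) \<Longrightarrow> h (x s) s = leftval 0 (h (x s)) s + 2 \<Longrightarrow> ya = x s"
        and ya3: "s \<in> P (x s) \<Longrightarrow> h (x s) s \<noteq> leftval 0 (h (x s)) s + 2 \<Longrightarrow>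
           (ya = x s - 1 \<or> ya = x s + 1) \<and> h ya s = h (x s) s - 1"
      using BP_left[OF bp s0] by metis
    obtain yb where ybll: "left_limit t1 xr s yb"
        and yb1: "s \<notin> P (xr s) \<Longrightarrow> yb = xr s"
        and yb2: "s \<in> P (xr s) \<Longrightarrow> hs (xr s) s = leftval t1 (hs (xr s)) s + 2 \<Longrightarrow> yb = xr s"
        and yb3: "s \<in> P (xr s) \<Longrightarrow> hs (xr s) s \<noteq> leftval t1 (hs (xr s)) s + 2 \<Longrightarrow>
           (yb = xr s - 1 \<or> yb = xr s + 1) \<and> hs yb s = hs (xr s) s - 1 \<and>
           (hs (xr s + 1) s = hs (xr s) s - 1 \<longrightarrow> yb = xr s + 1)"
      using BP_left[OF rbp s] by metis
    have yab: "x s - 1 \<le> ya \<and> ya \<le> x s + 1" using ya1 ya2 ya3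
      by (cases "s \<in> P (x s)"; cases "h (x s) s = leftval 0 (h (x s)) s + 2") auto
    have ybb: "xr s - 1 \<le> yb \<and> yb \<le> xr s + 1" using yb1 yb2 yb3
      by (cases "s \<in> P (xr s)"; cases "hs (xr s) s = leftval t1 (hs (xr s)) s + 2") auto
    have key: "ya \<le> yb"
    proof (cases "x s = xr s")
      case False
      then have lt: "x s < xr s" using Qs by simp
      have "s \<notin> P (x s) \<or> s \<notin> P (xr s)" using clocks_disj[OF ck, of s "x s" "xr s"] False by auto
      then show ?thesis using ya1 yb1 yab ybb lt by auto
    next
      case True
      define z where "z = x s"
      have xz: "x s = z" and xrz: "xr s = z" using True z_def by auto
      show ?thesis
      proof (cases "s \<in> P z")
        case False
        then show ?thesis using ya1 yb1 xz xrz by simp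
      next
        case pz: True
        define hL where "hL k = leftval 0 (h k) s" for k
        define sL where "sL k = leftval t1 (hs k) s" for k
        have fin: "finite {z-1..z+1}" by simp
        have ev: "\<forall>\<^sub>F u in at_left s. x u = ya \<and> (\<forall>k\<in>{z-1..z+1}. h k u = hL k \<and> hs k u = sL k) \<and> (u < s \<and> t1 < u)"
        proof -
          have e1: "\<forall>\<^sub>F u in at_left s. h k u = hL k" for k unfolding hL_def using TH_left[OF th s0(1)] .
          have e2: "\<forall>\<^sub>F u in at_left s. hs k u = sL k" for k unfolding sL_def using TH_left[OF ths s(1)] .
          have e3: "\<forall>\<^sub>F u in at_left s. (\<forall>k\<in>{z-1..z+1}. h k u = hL k \<and> hs k u = sL k)"
            using fin by (rule eventually_ball_finite) (auto intro!: eventually_conj e1 e2)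
          show ?thesis using left_limit_ev[OF yall s0(1)] e3 ev_left_less[OF s(1)] by (simp add: eventually_conj_iff)
        qed
        then obtain u where u1: "x u = ya" and u2: "\<forall>k\<in>{z-1..z+1}. h k u = hL k \<and> hs k u = sL k"
          and u3: "u < s" "t1 < u"
          by (rule ev_left_obtain) blast
        have Lu: "\<forall>j. j \<le> x u \<longrightarrow> \<not> (h j u - h (j-1) u = -1 \<and> hs j u - hs (j-1) u = 1)"
          using L u3 s by auto
        have Lz: "\<not> (hL z - hL (z-1) = -1 \<and> sL z - sL (z-1) = 1)" if "z \<le> ya"
          using Lu[rule_format, of z] u1 u2 that by auto
        have Lz1: "\<not> (hL (z+1) - hL z = -1 \<and> sL (z+1) - sL z = 1)" if "z + 1 \<le> ya"
          using Lu[rule_format, of "z+1"] u1 u2 that by auto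
        have Hz: "h z s = (if s \<in> P z \<and> hL z - hL (z-1) = -1 \<and> hL (z+1) - hL z = 1 then hL z + 2 else hL z)"
          using TH_step[OF th s0(1), of z] unfolding hL_def by simp
        have Sz: "hs z s = (if s \<in> P z \<and> sL z - sL (z-1) = -1 \<and> sL (z+1) - sL z = 1 then sL z + 2 else sL z)"
          using TH_step[OF ths s(1), of z] unfolding sL_def by simp
        have npz1: "s \<notin> P (z+1)" "s \<notin> P (z-1)" using clocks_disj[OF ck pz] by force+
        have Hz1: "h (z+1) s = hL (z+1)" "h (z-1) s = hL (z-1)"
          using TH_step[OF th s0(1), of "z+1"] TH_step[OF th s0(1), of "z-1"] npz1 unfolding hL_def by auto
        have Sz1: "hs (z+1) s = sL (z+1)" "hs (z-1) s = sL (z-1)"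
          using TH_step[OF ths s(1), of "z+1"] TH_step[OF ths s(1), of "z-1"] npz1 unfolding sL_def by auto
        have sl: "(hL k - hL (k-1) = 1 \<or> hL k - hL (k-1) = -1) \<and> (sL k - sL (k-1) = 1 \<or> sL k - sL (k-1) = -1)" for k
          unfolding hL_def sL_def using TH_left_slope[OF th s0(1), of k] TH_left_slope[OF ths s(1), of k] by blast
        have YA: "(ya = z \<and> h z s = hL z + 2) \<or> (ya = z - 1 \<and> h z s \<noteq> hL z + 2 \<and> h (z-1) s = h z s - 1)
                  \<or> (ya = z + 1 \<and> h z s \<noteq> hL z + 2 \<and> h (z+1) s = h z s - 1)"
          using ya2 ya3 pz xz unfolding hL_def by (cases "h z s = leftval 0 (h z) s + 2") auto
        have YB: "(yb = z \<and> hs z s = sL z + 2) \<or> (yb = z - 1 \<and> hs z s \<noteq> sL z + 2 \<and> hs (z-1) s = hs z s - 1 \<and> hs (z+1) s \<noteq> hs z s - 1)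
                  \<or> (yb = z + 1 \<and> hs z s \<noteq> sL z + 2 \<and> hs (z+1) s = hs z s - 1)"
          using yb2 yb3 pz xrz unfolding sL_def by (cases "hs z s = leftval t1 (hs z) s + 2") auto
        note sl0 = sl[of z] and sl1 = sl[of "z+1"]
        show ?thesis
        proof (rule ccontr)
          assume "\<not> ya \<le> yb"
          then show False using YA YB Hz Sz Hz1 Sz1 sl0 sl1 Lz Lz1 pz by (auto split: if_splits)
        qed
      qed
    qed
    have "\<forall>\<^sub>F u in at_left s. x u = ya \<and> xr u = yb"
      using left_limit_ev[OF yall s0(1)] left_limit_ev[OF ybll s(1)] by (rule eventually_conj)
    then obtain b where b: "b < s" "\<forall>y>b. y < s \<longrightarrow> x y = ya \<and> xr y = yb"
      unfolding eventually_at_left_field by blast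
    show "\<exists>e>0. \<forall>u. s - e < u \<and> u < s \<longrightarrow> x u \<le> xr u"
      using b key by (intro exI[of _ "s - b"]) auto
  qed
qed

end
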